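(* Let $f_1=f_1(x^1)$ be a smooth nowhere-vanishing function depending only on $x^1$, let $f_2=k_2$, $f_3=k_3$ with $k_2,k_3\in\mathbb R\setminus\{0\}$, and $g=\frac{1}{f_1^2}dx^1\otimes dx^1+\frac{1}{k_2^2}dx^2\otimes dx^2+\frac{1}{k_3^2}dx^3\otimes dx^3$. Let $F$ satisfy $F'=\frac{1}{f_1}$. Then $V=\sum_{k=1}^3V^kE_k$, with $E_i=f_i\frac{\partial}{\partial x^i}$, is a Killing vector field of $(\mathbb R^3,g)$ if and only if $V^1(x^2,x^3)=c_1x^2+c_2x^3+c_3$, $V^2(x^1,x^3)=-c_1k_2F(x^1)-\frac{c_4}{k_3}x^3+c_5$, $V^3(x^1,x^2)=-c_2k_3F(x^1)+\frac{c_4}{k_2}x^2+c_6$ for some $c_1,\dots,c_6\in\mathbb R$.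
   Context: $x^1,x^2,x^3$ are the standard coordinates on $\mathbb R^3$; $V^k$ are smooth functions and writing $h(x^i,x^j)$ means $h$ depends only on those variables. A vector field $V$ is Killing if $\mathcal L_Vg=0$. *)

theory Defs
  imports "HOL-Analysis.Analysis"
begin

definition partial :: "3 \<Rightarrow> (real^3 \<Rightarrow> real) \<Rightarrow> real^3 \<Rightarrow> real" where
  "partial i u x = deriv (\<lambda>t. u (x + t *\<^sub>R axis i 1)) 0"

definition smooth3 :: "(real^3 \<Rightarrow> real) \<Rightarrow> bool" where
  "smooth3 u \<longleftrightarrow> (\<forall>is. \<forall>x. (foldr partial is u) differentiable (at x))"

definition smooth1 :: "(real \<Rightarrow> real) \<Rightarrow> bool" where
  "smooth1 f \<longleftrightarrow> (\<forall>n. \<forall>t. ((deriv ^^ n) f) differentiable (at t))"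

text \<open>Coordinate expression of the Lie derivative of a metric g_ij along a vector field
  with coordinate components W^k (W = sum_k W^k d/dx^k).\<close>
definition lie_deriv_metric ::
  "(real^3 \<Rightarrow> real^3) \<Rightarrow> (3 \<Rightarrow> 3 \<Rightarrow> real^3 \<Rightarrow> real) \<Rightarrow> 3 \<Rightarrow> 3 \<Rightarrow> real^3 \<Rightarrow> real" where
  "lie_deriv_metric W g i j x =
     (\<Sum>k\<in>UNIV. W x $ k * partial k (g i j) x)
   + (\<Sum>k\<in>UNIV. g k j x * partial i (\<lambda>y. W y $ k) x)
   + (\<Sum>k\<in>UNIV. g i k x * partial j (\<lambda>y. W y $ k) x)"

definition killing :: "(real^3 \<Rightarrow> real^3) \<Rightarrow> (3 \<Rightarrow> 3 \<Rightarrow> real^3 \<Rightarrow> real) \<Rightarrow> bool" where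
  "killing W g \<longleftrightarrow> (\<forall>i j x. lie_deriv_metric W g i j x = 0)"

text \<open>The frame E_i = f_i d/dx^i with f_1 = f1(x^1), f_2 = k2, f_3 = k3.\<close>
definition frame_coeff :: "(real \<Rightarrow> real) \<Rightarrow> real \<Rightarrow> real \<Rightarrow> 3 \<Rightarrow> real^3 \<Rightarrow> real" where
  "frame_coeff f1 k2 k3 i x = (if i = 1 then f1 (x$1) else if i = 2 then k2 else k3)"

definition diag_metric :: "(real \<Rightarrow> real) \<Rightarrow> real \<Rightarrow> real \<Rightarrow> 3 \<Rightarrow> 3 \<Rightarrow> real^3 \<Rightarrow> real" where
  "diag_metric f1 k2 k3 i j x = (if i = j then 1 / (frame_coeff f1 k2 k3 i x)\<^sup>2 else 0)"

text \<open>Coordinate components of V = sum_k V^k E_k.\<close>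
definition frame_field :: "(real \<Rightarrow> real) \<Rightarrow> real \<Rightarrow> real \<Rightarrow> (real^3 \<Rightarrow> real^3) \<Rightarrow> real^3 \<Rightarrow> real^3" where
  "frame_field f1 k2 k3 V x = (\<chi> k. frame_coeff f1 k2 k3 k x * V x $ k)"

end

theory Submission
  imports Defs
begin


definition pt :: "real \<Rightarrow> real \<Rightarrow> real \<Rightarrow> real^3" where
  "pt a b c = vector [a,b,c]"

lemma pt_nth[simp]: "pt a b c $ 1 = a" "pt a b c $ 2 = b" "pt a b c $ 3 = c"
  by (simp_all add: pt_def)

lemma neq3[simp]: "(1::3) \<noteq> 2" "(1::3) \<noteq> 3" "(2::3) \<noteq> 3" "(2::3) \<noteq> 1" "(3::3) \<noteq> 1" "(3::3) \<noteq> 2"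
  by simp_all

lemma pt_eta: "x = pt (x$1) (x$2) (x$3)"
  by (simp add: vec_eq_iff forall_3)

lemma pt_add:
  "pt a b c + t *\<^sub>R axis 1 1 = pt (a+t) b c"
  "pt a b c + t *\<^sub>R axis 2 1 = pt a (b+t) c"
  "pt a b c + t *\<^sub>R axis 3 1 = pt a b (c+t)"
  by (simp_all add: vec_eq_iff forall_3 axis_def)

lemma deriv_shift0: "deriv (\<lambda>t. f (a + t)) 0 = deriv f (a::real)"
proof -
  have "\<And>D. DERIV (\<lambda>t. f (a + t)) 0 :> D \<longleftrightarrow> DERIV f a :> D"
    using DERIV_shift[of f _ 0 a] by (simp add: add.commute)
  then show ?thesis unfolding deriv_def by simp
qed

lemma partial_pt:
  "partial 1 u (pt a b c) = deriv (\<lambda>t. u (pt t b c)) a"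
  "partial 2 u (pt a b c) = deriv (\<lambda>t. u (pt a t c)) b"
  "partial 3 u (pt a b c) = deriv (\<lambda>t. u (pt a b t)) c"
  unfolding partial_def pt_add
  using deriv_shift0[of "\<lambda>t. u (pt t b c)" a] deriv_shift0[of "\<lambda>t. u (pt a t c)" b]
    deriv_shift0[of "\<lambda>t. u (pt a b t)" c] by simp_all

lemma restr_diff:
  assumes "\<forall>y. u differentiable (at y)"
  shows "(\<lambda>t. u (pt t b c)) differentiable (at a)"
    "(\<lambda>t. u (pt a t c)) differentiable (at b)"
    "(\<lambda>t. u (pt a b t)) differentiable (at c)"
proof -
  have lin: "(\<lambda>t. x + t *\<^sub>R d) differentiable (at s)" for x d :: "real^3" and s :: real
    by (intro derivative_intros)
  have g: "(\<lambda>t. u (x + t *\<^sub>R d)) differentiable (at s)" for x d :: "real^3" and s :: real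
    using differentiable_chain_at[OF lin assms[rule_format]] by (simp add: o_def)
  show "(\<lambda>t. u (pt t b c)) differentiable (at a)"
    using g[of "pt 0 b c" "axis 1 1" a] by (simp add: pt_add)
  show "(\<lambda>t. u (pt a t c)) differentiable (at b)"
    using g[of "pt a 0 c" "axis 2 1" b] by (simp add: pt_add)
  show "(\<lambda>t. u (pt a b t)) differentiable (at c)"
    using g[of "pt a b 0" "axis 3 1" c] by (simp add: pt_add)
qed

lemma dconst: "deriv (\<lambda>t. c) (x::real) = 0"
  by (rule DERIV_imp_deriv) (rule DERIV_const)

lemma dcmult: "\<phi> differentiable (at x) \<Longrightarrow> deriv (\<lambda>t. c * \<phi> t) (x::real) = c * deriv \<phi> x"
  by (rule DERIV_imp_deriv) (auto intro!: derivative_eq_intros simp: DERIV_deriv_iff_real_differentiable[symmetric])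

lemma dprod: "f differentiable (at x) \<Longrightarrow> \<phi> differentiable (at x) \<Longrightarrow>
   deriv (\<lambda>t. f t * \<phi> t) (x::real) = f x * deriv \<phi> x + deriv f x * \<phi> x"
  by (rule DERIV_imp_deriv) (auto intro!: derivative_eq_intros simp: DERIV_deriv_iff_real_differentiable[symmetric])

lemma dinv2: "f differentiable (at x) \<Longrightarrow> f x \<noteq> 0 \<Longrightarrow>
   deriv (\<lambda>t. 1 / (f t)\<^sup>2) (x::real) = - 2 * deriv f x / (f x)^3"
  apply (rule DERIV_imp_deriv)
  apply (rule derivative_eq_intros refl | simp add: DERIV_deriv_iff_real_differentiable[symmetric])+
  apply (simp add: field_simps power2_eq_square power3_eq_cube power4_eq_xxxx)
  done

lemma killing_iff:
  assumes f1d: "\<forall>t. f1 differentiable (at t)" and f1nz: "\<forall>t. f1 t \<noteq> 0"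
    and "k2 \<noteq> 0" and "k3 \<noteq> 0"
    and Vd: "\<forall>k y. (\<lambda>x. V x $ k) differentiable (at y)"
  shows "killing (frame_field f1 k2 k3 V) (diag_metric f1 k2 k3) \<longleftrightarrow>
    (\<forall>a b c.
       deriv (\<lambda>t. V (pt t b c) $ 1) a = 0
     \<and> deriv (\<lambda>t. V (pt a t c) $ 2) b = 0
     \<and> deriv (\<lambda>t. V (pt a b t) $ 3) c = 0
     \<and> deriv (\<lambda>t. V (pt a t c) $ 1) b / f1 a + deriv (\<lambda>t. V (pt t b c) $ 2) a / k2 = 0
     \<and> deriv (\<lambda>t. V (pt a b t) $ 1) c / f1 a + deriv (\<lambda>t. V (pt t b c) $ 3) a / k3 = 0
     \<and> deriv (\<lambda>t. V (pt a b t) $ 2) c / k2 + deriv (\<lambda>t. V (pt a t c) $ 3) b / k3 = 0)"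
proof -
  have Vd': "\<forall>y. (\<lambda>x. V x $ k) differentiable (at y)" for k using Vd by blast
  note rd = restr_diff[OF Vd']
  let ?W = "frame_field f1 k2 k3 V" and ?g = "diag_metric f1 k2 k3"
  have K: "killing ?W ?g \<longleftrightarrow> (\<forall>a b c. \<forall>i j. lie_deriv_metric ?W ?g i j (pt a b c) = 0)"
    unfolding killing_def by (metis pt_eta)
  have fa: "f1 a \<noteq> 0" for a using f1nz by blast
  note simps = lie_deriv_metric_def sum_3 partial_pt frame_field_def frame_coeff_def diag_metric_def
     dconst dcmult dprod dinv2 rd f1d fa
  have L1: "lie_deriv_metric ?W ?g 1 1 (pt a b c) = 2 * deriv (\<lambda>t. V (pt t b c) $ 1) a / f1 a" for a b c
    using assms apply (simp add: simps)
    apply (simp add: field_simps power2_eq_square power3_eq_cube)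
    done
  have L: 
     "lie_deriv_metric ?W ?g 2 2 (pt a b c) = 2 * deriv (\<lambda>t. V (pt a t c) $ 2) b / k2"
     "lie_deriv_metric ?W ?g 3 3 (pt a b c) = 2 * deriv (\<lambda>t. V (pt a b t) $ 3) c / k3"
     "lie_deriv_metric ?W ?g 1 2 (pt a b c) = deriv (\<lambda>t. V (pt a t c) $ 1) b / f1 a + deriv (\<lambda>t. V (pt t b c) $ 2) a / k2"
     "lie_deriv_metric ?W ?g 2 1 (pt a b c) = deriv (\<lambda>t. V (pt a t c) $ 1) b / f1 a + deriv (\<lambda>t. V (pt t b c) $ 2) a / k2"
     "lie_deriv_metric ?W ?g 1 3 (pt a b c) = deriv (\<lambda>t. V (pt a b t) $ 1) c / f1 a + deriv (\<lambda>t. V (pt t b c) $ 3) a / k3"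
     "lie_deriv_metric ?W ?g 3 1 (pt a b c) = deriv (\<lambda>t. V (pt a b t) $ 1) c / f1 a + deriv (\<lambda>t. V (pt t b c) $ 3) a / k3"
     "lie_deriv_metric ?W ?g 2 3 (pt a b c) = deriv (\<lambda>t. V (pt a b t) $ 2) c / k2 + deriv (\<lambda>t. V (pt a t c) $ 3) b / k3"
     "lie_deriv_metric ?W ?g 3 2 (pt a b c) = deriv (\<lambda>t. V (pt a b t) $ 2) c / k2 + deriv (\<lambda>t. V (pt a t c) $ 3) b / k3"
     for a b c
    using assms by (simp_all add: simps) (simp_all add: field_simps power2_eq_square)
  show ?thesis unfolding K forall_3 L L1 using assms fa by (auto simp: add.commute)
qed



lemma lin1:
  fixes \<phi> :: "real \<Rightarrow> real"
  assumes "\<And>t. DERIV \<phi> t :> m"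
  shows "\<phi> t = \<phi> 0 + m * t"
proof -
  have "\<forall>t. DERIV (\<lambda>t. \<phi> t - m * t) t :> 0"
    using assms by (auto intro!: derivative_eq_intros)
  from DERIV_isconst_all[OF this, of t 0] show ?thesis by simp
qed

lemma solve_fwd:
  fixes A B C :: "real \<Rightarrow> real \<Rightarrow> real \<Rightarrow> real" and f1 F :: "real \<Rightarrow> real"
  assumes dA: "\<And>a b c. (\<lambda>t. A t b c) differentiable (at a)" "\<And>a b c. (\<lambda>t. A a t c) differentiable (at b)"
     "\<And>a b c. (\<lambda>t. A a b t) differentiable (at c)"
   and dB: "\<And>a b c. (\<lambda>t. B t b c) differentiable (at a)" "\<And>a b c. (\<lambda>t. B a t c) differentiable (at b)"
     "\<And>a b c. (\<lambda>t. B a b t) differentiable (at c)"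
   and dC: "\<And>a b c. (\<lambda>t. C t b c) differentiable (at a)" "\<And>a b c. (\<lambda>t. C a t c) differentiable (at b)"
     "\<And>a b c. (\<lambda>t. C a b t) differentiable (at c)"
   and f1nz: "\<And>t. f1 t \<noteq> 0" and k2: "k2 \<noteq> 0" and k3: "k3 \<noteq> 0"
   and Fd: "\<And>t. (F has_real_derivative 1 / f1 t) (at t)"
   and E: "\<And>a b c. deriv (\<lambda>t. A t b c) a = 0
     \<and> deriv (\<lambda>t. B a t c) b = 0
     \<and> deriv (\<lambda>t. C a b t) c = 0
     \<and> deriv (\<lambda>t. A a t c) b / f1 a + deriv (\<lambda>t. B t b c) a / k2 = 0
     \<and> deriv (\<lambda>t. A a b t) c / f1 a + deriv (\<lambda>t. C t b c) a / k3 = 0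
     \<and> deriv (\<lambda>t. B a b t) c / k2 + deriv (\<lambda>t. C a t c) b / k3 = 0"
  shows "\<exists>c1 c2 c3 c4 c5 c6. \<forall>a b c. A a b c = c1 * b + c2 * c + c3
      \<and> B a b c = - c1 * k2 * F a - c4 / k3 * c + c5
      \<and> C a b c = - c2 * k3 * F a + c4 / k2 * b + c6"
proof -
  define dA1 where "dA1 a b c = deriv (\<lambda>t. A t b c) a" for a b c
  define dA2 where "dA2 a b c = deriv (\<lambda>t. A a t c) b" for a b c
  define dA3 where "dA3 a b c = deriv (\<lambda>t. A a b t) c" for a b c
  define dB1 where "dB1 a b c = deriv (\<lambda>t. B t b c) a" for a b c
  define dB2 where "dB2 a b c = deriv (\<lambda>t. B a t c) b" for a b c
  define dB3 where "dB3 a b c = deriv (\<lambda>t. B a b t) c" for a b c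
  define dC1 where "dC1 a b c = deriv (\<lambda>t. C t b c) a" for a b c
  define dC2 where "dC2 a b c = deriv (\<lambda>t. C a t c) b" for a b c
  define dC3 where "dC3 a b c = deriv (\<lambda>t. C a b t) c" for a b c
  note DD = DERIV_deriv_iff_real_differentiable[THEN iffD2]
  have DA1: "DERIV (\<lambda>t. A t b c) a :> dA1 a b c" for a b c unfolding dA1_def by (rule DD[OF dA(1)])
  have DA2: "DERIV (\<lambda>t. A a t c) b :> dA2 a b c" for a b c unfolding dA2_def by (rule DD[OF dA(2)])
  have DA3: "DERIV (\<lambda>t. A a b t) c :> dA3 a b c" for a b c unfolding dA3_def by (rule DD[OF dA(3)])
  have DB1: "DERIV (\<lambda>t. B t b c) a :> dB1 a b c" for a b c unfolding dB1_def by (rule DD[OF dB(1)])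
  have DB2: "DERIV (\<lambda>t. B a t c) b :> dB2 a b c" for a b c unfolding dB2_def by (rule DD[OF dB(2)])
  have DB3: "DERIV (\<lambda>t. B a b t) c :> dB3 a b c" for a b c unfolding dB3_def by (rule DD[OF dB(3)])
  have DC1: "DERIV (\<lambda>t. C t b c) a :> dC1 a b c" for a b c unfolding dC1_def by (rule DD[OF dC(1)])
  have DC2: "DERIV (\<lambda>t. C a t c) b :> dC2 a b c" for a b c unfolding dC2_def by (rule DD[OF dC(2)])
  have DC3: "DERIV (\<lambda>t. C a b t) c :> dC3 a b c" for a b c unfolding dC3_def by (rule DD[OF dC(3)])
  have E1: "dA1 a b c = 0" "dB2 a b c = 0" "dC3 a b c = 0"
    and E4: "dA2 a b c / f1 a + dB1 a b c / k2 = 0"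
    and E5: "dA3 a b c / f1 a + dC1 a b c / k3 = 0"
    and E6: "dB3 a b c / k2 + dC2 a b c / k3 = 0" for a b c
    using E[where a=a and b=b and c=c] unfolding dA1_def dA2_def dA3_def dB1_def dB2_def dB3_def dC1_def dC2_def dC3_def
    by auto
  have SA: "A a b c = A 0 b c" for a b c
    using lin1[of "\<lambda>t. A t b c" 0 a] DA1 E1 by simp
  have SB: "B a b c = B a 0 c" for a b c
    using lin1[of "\<lambda>t. B a t c" 0 b] DB2 E1 by simp
  have SC: "C a b c = C a b 0" for a b c
    using lin1[of "\<lambda>t. C a b t" 0 c] DC3 E1 by simp
  have IA2: "dA2 a b c = dA2 0 b c" for a b c
  proof -
    have "(\<lambda>t. A a t c) = (\<lambda>t. A 0 t c)" by (rule ext) (rule SA)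
    then show ?thesis unfolding dA2_def by simp
  qed
  have IA3: "dA3 a b c = dA3 0 b c" for a b c
  proof -
    have "(\<lambda>t. A a b t) = (\<lambda>t. A 0 b t)" by (rule ext) (rule SA)
    then show ?thesis unfolding dA3_def by simp
  qed
  have IB1: "dB1 a b c = dB1 a 0 c" for a b c
  proof -
    have "(\<lambda>t. B t b c) = (\<lambda>t. B t 0 c)" by (rule ext) (rule SB)
    then show ?thesis unfolding dB1_def by simp
  qed
  have IC1: "dC1 a b c = dC1 a b 0" for a b c
  proof -
    have "(\<lambda>t. C t b c) = (\<lambda>t. C t b 0)" by (rule ext) (rule SC)
    then show ?thesis unfolding dC1_def by simp
  qed
  have IB3: "dB3 a b c = dB3 a 0 c" for a b c
  proof -
    have "(\<lambda>t. B a b t) = (\<lambda>t. B a 0 t)" by (rule ext) (rule SB)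
    then show ?thesis unfolding dB3_def by simp
  qed
  have IC2: "dC2 a b c = dC2 a b 0" for a b c
  proof -
    have "(\<lambda>t. C a t c) = (\<lambda>t. C a t 0)" by (rule ext) (rule SC)
    then show ?thesis unfolding dC2_def by simp
  qed
  have R4: "dA2 a b c = - (f1 a / k2) * dB1 a b c" for a b c
    using E4[of a b c] f1nz[of a] k2 by (simp add: field_simps)
  have R5: "dA3 a b c = - (f1 a / k3) * dC1 a b c" for a b c
    using E5[of a b c] f1nz[of a] k3 by (simp add: field_simps)
  have J2: "dA2 a b c = dA2 0 0 c" for a b c
  proof -
    have "dA2 a b c = dA2 a 0 c" using R4[of a b c] R4[of a 0 c] IB1[of a b c] by simp
    then show ?thesis using IA2 by metis
  qed
  have J3: "dA3 a b c = dA3 0 b 0" for a b c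
  proof -
    have "dA3 a b c = dA3 a b 0" using R5[of a b c] R5[of a b 0] IC1[of a b c] by simp
    then show ?thesis using IA3 by metis
  qed
  have LA2: "A 0 b c = A 0 0 c + dA2 0 0 c * b" for b c
    by (rule lin1[of "\<lambda>t. A 0 t c"]) (metis DA2 J2)
  have LA3: "A 0 b c = A 0 b 0 + dA3 0 b 0 * c" for b c
    by (rule lin1[of "\<lambda>t. A 0 b t"]) (metis DA3 J3)
  define p where "p = dA3 0 1 0 - dA3 0 0 0"
  define q where "q = dA2 0 0 0"
  define r where "r = dA3 0 0 0"
  define s where "s = A 0 0 0"
  have star: "s + r * c + dA2 0 0 c * b = s + q * b + dA3 0 b 0 * c" for b c
    using LA2[of b c] LA3[of b c] LA2[of b 0] LA3[of 0 c] unfolding s_def q_def r_def by simp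
  have d2: "dA2 0 0 c = q + p * c" for c
    using star[where b=1 and c=c] unfolding p_def r_def by (simp add: algebra_simps)
  have d3: "dA3 0 b 0 = r + p * b" for b
    using star[where b=b and c=1] d2[of 1] unfolding r_def by (simp add: algebra_simps)
  have Aform: "A a b c = s + r * c + (q + p * c) * b" for a b c
    using SA[of a b c] LA2[of b c] LA3[of 0 c] d2[of c] by (simp add: s_def[symmetric] r_def[symmetric])
  have A2: "dA2 a b c = q + p * c" for a b c using J2[of a b c] d2[of c] by simp
  have A3: "dA3 a b c = r + p * b" for a b c using J3[of a b c] d3[of b] by simp
  have f1inv: "f1 t * (1 / f1 t) = 1" for t using f1nz[of t] by simp
  have B1: "dB1 a b c = - (k2 / f1 a) * (q + p * c)" for a b c
    using E4[of a b c] A2[of a b c] f1nz[of a] k2 by (simp add: field_simps)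
  have C1: "dC1 a b c = - (k3 / f1 a) * (r + p * b)" for a b c
    using E5[of a b c] A3[of a b c] f1nz[of a] k3 by (simp add: field_simps)
  have Bf: "B a b c = B 0 0 c - k2 * (q + p * c) * (F a - F 0)" for a b c
  proof -
    have "\<forall>t. DERIV (\<lambda>t. B t b c + k2 * (q + p * c) * F t) t :> 0"
    proof
      fix t
      have "DERIV (\<lambda>t. B t b c + k2 * (q + p * c) * F t) t :> dB1 t b c + k2 * (q + p * c) * (1 / f1 t)"
        using DB1[of b c t] Fd[of t] by (auto intro!: derivative_eq_intros)
      moreover have "dB1 t b c + k2 * (q + p * c) * (1 / f1 t) = 0"
        using B1[of t b c] f1nz[of t] by (simp add: field_simps)
      ultimately show "DERIV (\<lambda>t. B t b c + k2 * (q + p * c) * F t) t :> 0" by simp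
    qed
    from DERIV_isconst_all[OF this, of a 0] SB[of 0 b c] show ?thesis by (simp add: algebra_simps)
  qed
  have Cf: "C a b c = C 0 b 0 - k3 * (r + p * b) * (F a - F 0)" for a b c
  proof -
    have "\<forall>t. DERIV (\<lambda>t. C t b c + k3 * (r + p * b) * F t) t :> 0"
    proof
      fix t
      have "DERIV (\<lambda>t. C t b c + k3 * (r + p * b) * F t) t :> dC1 t b c + k3 * (r + p * b) * (1 / f1 t)"
        using DC1[of b c t] Fd[of t] by (auto intro!: derivative_eq_intros)
      moreover have "dC1 t b c + k3 * (r + p * b) * (1 / f1 t) = 0"
        using C1[of t b c] f1nz[of t] by (simp add: field_simps)
      ultimately show "DERIV (\<lambda>t. C t b c + k3 * (r + p * b) * F t) t :> 0" by simp
    qed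
    from DERIV_isconst_all[OF this, of a 0] SC[of 0 b c] show ?thesis by (simp add: algebra_simps)
  qed
  have B3: "dB3 a b c = dB3 0 b c - k2 * p * (F a - F 0)" for a b c
  proof -
    have eq: "(\<lambda>t. B a b t) = (\<lambda>t. B 0 b t - k2 * (q + p * t) * (F a - F 0))"
      using Bf[of a b] Bf[of 0 b] by auto
    have "DERIV (\<lambda>t. B 0 b t - k2 * (q + p * t) * (F a - F 0)) c :> dB3 0 b c - k2 * p * (F a - F 0)"
      using DB3[of 0 b c] by (auto intro!: derivative_eq_intros)
    with DB3[of a b c] show ?thesis unfolding eq by (rule DERIV_unique)
  qed
  have C2: "dC2 a b c = dC2 0 b c - k3 * p * (F a - F 0)" for a b c
  proof -
    have eq: "(\<lambda>t. C a t c) = (\<lambda>t. C 0 t c - k3 * (r + p * t) * (F a - F 0))"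
      using Cf[of a _ c] Cf[of 0 _ c] by auto
    have "DERIV (\<lambda>t. C 0 t c - k3 * (r + p * t) * (F a - F 0)) b :> dC2 0 b c - k3 * p * (F a - F 0)"
      using DC2[of 0 c b] by (auto intro!: derivative_eq_intros)
    with DC2[of a c b] show ?thesis unfolding eq by (rule DERIV_unique)
  qed
  have pF: "p * (F a - F 0) = 0" for a
  proof -
    have h1: "dB3 a 0 0 / k2 = dB3 0 0 0 / k2 - p * (F a - F 0)"
      using B3[of a 0 0] k2 by (simp add: field_simps)
    have h2: "dC2 a 0 0 / k3 = dC2 0 0 0 / k3 - p * (F a - F 0)"
      using C2[of a 0 0] k3 by (simp add: field_simps)
    show ?thesis using E6[of a 0 0] E6[of 0 0 0] h1 h2 by linarith
  qed
  have F10: "F 1 \<noteq> F 0"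
  proof
    assume h: "F 1 = F 0"
    obtain z where "0 < z" "z < 1" "F 1 - F 0 = (1 - 0) * (1 / f1 z)"
      using MVT2[of 0 1 F "\<lambda>t. 1 / f1 t"] Fd by auto
    with h f1nz[of z] show False by simp
  qed
  have p0: "p = 0" using pF[of 1] F10 by simp
  have B3': "dB3 a b c = dB3 0 0 c" for a b c
    using B3[of a b c] IB3[of 0 b c] p0 by simp
  have C2': "dC2 a b c = dC2 0 b 0" for a b c
    using C2[of a b c] IC2[of 0 b c] p0 by simp
  define m where "m = dB3 0 0 0"
  define n where "n = dC2 0 0 0"
  have mc: "dB3 0 0 c = m" for c
  proof -
    have e: "dB3 0 0 c / k2 + dC2 0 0 0 / k3 = 0" using E6[of 0 0 c] C2'[of 0 0 c] by simp
    have "dB3 0 0 c / k2 = dB3 0 0 0 / k2" using e E6[of 0 0 0] by linarith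
    then show ?thesis using k2 unfolding m_def by simp
  qed
  have nb: "dC2 0 b 0 = n" for b
  proof -
    have e: "dB3 0 0 0 / k2 + dC2 0 b 0 / k3 = 0" using E6[of 0 b 0] B3'[of 0 b 0] by simp
    have "dC2 0 b 0 / k3 = dC2 0 0 0 / k3" using e E6[of 0 0 0] by linarith
    then show ?thesis using k3 unfolding n_def by simp
  qed
  have mn: "n = - (k3 / k2) * m"
    using E6[of 0 0 0] k2 k3 unfolding m_def n_def by (simp add: field_simps)
  have beta: "B 0 0 c = B 0 0 0 + m * c" for c
    by (rule lin1[of "\<lambda>t. B 0 0 t"]) (metis DB3 mc)
  have gamma: "C 0 b 0 = C 0 0 0 + n * b" for b
    by (rule lin1[of "\<lambda>t. C 0 t 0"]) (metis DC2 nb)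
  show ?thesis
  proof (intro exI allI conjI)
    fix a b c
    show "A a b c = q * b + r * c + s" using Aform[of a b c] p0 by simp
    show "B a b c = - q * k2 * F a - (- k3 * m) / k3 * c + (B 0 0 0 + k2 * q * F 0)"
      using Bf[of a b c] beta[of c] p0 k3 by (simp add: algebra_simps)
    show "C a b c = - r * k3 * F a + (- k3 * m) / k2 * b + (C 0 0 0 + k3 * r * F 0)"
      using Cf[of a b c] gamma[of b] p0 mn k2 by (simp add: algebra_simps)
  qed
qed

lemma solve_bwd:
  fixes A B C :: "real \<Rightarrow> real \<Rightarrow> real \<Rightarrow> real" and f1 F :: "real \<Rightarrow> real"
  assumes f1nz: "\<And>t. f1 t \<noteq> 0" and k2: "k2 \<noteq> 0" and k3: "k3 \<noteq> 0"
   and Fd: "\<And>t. (F has_real_derivative 1 / f1 t) (at t)"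
   and H: "\<forall>a b c. A a b c = c1 * b + c2 * c + c3
      \<and> B a b c = - c1 * k2 * F a - c4 / k3 * c + c5
      \<and> C a b c = - c2 * k3 * F a + c4 / k2 * b + c6"
  shows "deriv (\<lambda>t. A t b c) a = 0
     \<and> deriv (\<lambda>t. B a t c) b = 0
     \<and> deriv (\<lambda>t. C a b t) c = 0
     \<and> deriv (\<lambda>t. A a t c) b / f1 a + deriv (\<lambda>t. B t b c) a / k2 = 0
     \<and> deriv (\<lambda>t. A a b t) c / f1 a + deriv (\<lambda>t. C t b c) a / k3 = 0
     \<and> deriv (\<lambda>t. B a b t) c / k2 + deriv (\<lambda>t. C a t c) b / k3 = 0"
proof -
  have eA: "A = (\<lambda>a b c. c1 * b + c2 * c + c3)" using H by (auto simp: fun_eq_iff)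
  have eB: "B = (\<lambda>a b c. - c1 * k2 * F a - c4 / k3 * c + c5)" using H by (auto simp: fun_eq_iff)
  have eC: "C = (\<lambda>a b c. - c2 * k3 * F a + c4 / k2 * b + c6)" using H by (auto simp: fun_eq_iff)
  have d1: "deriv (\<lambda>t. A t b c) a = 0" unfolding eA by (rule DERIV_imp_deriv) (auto intro!: derivative_eq_intros)
  have d2: "deriv (\<lambda>t. B a t c) b = 0" unfolding eB by (rule DERIV_imp_deriv) (auto intro!: derivative_eq_intros)
  have d3: "deriv (\<lambda>t. C a b t) c = 0" unfolding eC by (rule DERIV_imp_deriv) (auto intro!: derivative_eq_intros)
  have a2: "deriv (\<lambda>t. A a t c) b = c1" unfolding eA by (rule DERIV_imp_deriv) (auto intro!: derivative_eq_intros)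
  have a3: "deriv (\<lambda>t. A a b t) c = c2" unfolding eA by (rule DERIV_imp_deriv) (auto intro!: derivative_eq_intros)
  have b1: "deriv (\<lambda>t. B t b c) a = - c1 * k2 * (1 / f1 a)" unfolding eB
    by (rule DERIV_imp_deriv) (auto intro!: derivative_eq_intros Fd)
  have c1': "deriv (\<lambda>t. C t b c) a = - c2 * k3 * (1 / f1 a)" unfolding eC
    by (rule DERIV_imp_deriv) (auto intro!: derivative_eq_intros Fd)
  have b3: "deriv (\<lambda>t. B a b t) c = - c4 / k3" unfolding eB
    by (rule DERIV_imp_deriv) (auto intro!: derivative_eq_intros simp: k3)
  have c2': "deriv (\<lambda>t. C a t c) b = c4 / k2" unfolding eC
    by (rule DERIV_imp_deriv) (auto intro!: derivative_eq_intros simp: k2)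
  show ?thesis using d1 d2 d3 a2 a3 b1 c1' b3 c2' f1nz[of a] k2 k3 by (simp add: field_simps)
qed


lemma all_pt: "(\<forall>x. Q x) \<longleftrightarrow> (\<forall>a b c. Q (pt a b c))"
  by (metis pt_eta)

theorem mainTheorem10:
  fixes f1 F :: "real \<Rightarrow> real" and k2 k3 :: real and V :: "real^3 \<Rightarrow> real^3"
  assumes "smooth1 f1" and "\<forall>t. f1 t \<noteq> 0"
    and "k2 \<noteq> 0" and "k3 \<noteq> 0"
    and "\<forall>t. (F has_real_derivative 1 / f1 t) (at t)"
    and "\<forall>k. smooth3 (\<lambda>x. V x $ k)"
  shows "killing (frame_field f1 k2 k3 V) (diag_metric f1 k2 k3) \<longleftrightarrow>
    (\<exists>c1 c2 c3 c4 c5 c6 :: real. \<forall>x.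
        V x $ 1 = c1 * x$2 + c2 * x$3 + c3
      \<and> V x $ 2 = - c1 * k2 * F (x$1) - c4 / k3 * x$3 + c5
      \<and> V x $ 3 = - c2 * k3 * F (x$1) + c4 / k2 * x$2 + c6)"
proof -
  have f1d: "\<forall>t. f1 differentiable (at t)"
    using assms(1) unfolding smooth1_def by (metis funpow_0)
  have Vd: "\<forall>k y. (\<lambda>x. V x $ k) differentiable (at y)"
    using assms(6) unfolding smooth3_def by (metis foldr_Nil id_apply)
  have Vd': "\<forall>y. (\<lambda>x. V x $ k) differentiable (at y)" for k using Vd by blast
  note rd = restr_diff[OF Vd']
  have f1nz: "\<And>t. f1 t \<noteq> 0" using assms(2) by blast
  have Fd: "\<And>t. (F has_real_derivative 1 / f1 t) (at t)" using assms(5) by blast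
  have R: "(\<exists>c1 c2 c3 c4 c5 c6 :: real. \<forall>x.
        V x $ 1 = c1 * x$2 + c2 * x$3 + c3
      \<and> V x $ 2 = - c1 * k2 * F (x$1) - c4 / k3 * x$3 + c5
      \<and> V x $ 3 = - c2 * k3 * F (x$1) + c4 / k2 * x$2 + c6) \<longleftrightarrow>
    (\<exists>c1 c2 c3 c4 c5 c6 :: real. \<forall>a b c.
        V (pt a b c) $ 1 = c1 * b + c2 * c + c3
      \<and> V (pt a b c) $ 2 = - c1 * k2 * F a - c4 / k3 * c + c5
      \<and> V (pt a b c) $ 3 = - c2 * k3 * F a + c4 / k2 * b + c6)"
    by (simp only: all_pt pt_nth)
  show ?thesis
    unfolding killing_iff[OF f1d assms(2-4) Vd] R
  proof
    assume E: "\<forall>a b c.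
       deriv (\<lambda>t. V (pt t b c) $ 1) a = 0
     \<and> deriv (\<lambda>t. V (pt a t c) $ 2) b = 0
     \<and> deriv (\<lambda>t. V (pt a b t) $ 3) c = 0
     \<and> deriv (\<lambda>t. V (pt a t c) $ 1) b / f1 a + deriv (\<lambda>t. V (pt t b c) $ 2) a / k2 = 0
     \<and> deriv (\<lambda>t. V (pt a b t) $ 1) c / f1 a + deriv (\<lambda>t. V (pt t b c) $ 3) a / k3 = 0
     \<and> deriv (\<lambda>t. V (pt a b t) $ 2) c / k2 + deriv (\<lambda>t. V (pt a t c) $ 3) b / k3 = 0"
    show "\<exists>c1 c2 c3 c4 c5 c6 :: real. \<forall>a b c.
        V (pt a b c) $ 1 = c1 * b + c2 * c + c3
      \<and> V (pt a b c) $ 2 = - c1 * k2 * F a - c4 / k3 * c + c5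
      \<and> V (pt a b c) $ 3 = - c2 * k3 * F a + c4 / k2 * b + c6"
      by (rule solve_fwd[where A="\<lambda>a b c. V (pt a b c) $ 1" and B="\<lambda>a b c. V (pt a b c) $ 2"
            and C="\<lambda>a b c. V (pt a b c) $ 3",
            OF rd(1) rd(2) rd(3) rd(1) rd(2) rd(3) rd(1) rd(2) rd(3) f1nz assms(3,4) Fd])
         (use E in blast)
  next
    assume "\<exists>c1 c2 c3 c4 c5 c6 :: real. \<forall>a b c.
        V (pt a b c) $ 1 = c1 * b + c2 * c + c3
      \<and> V (pt a b c) $ 2 = - c1 * k2 * F a - c4 / k3 * c + c5
      \<and> V (pt a b c) $ 3 = - c2 * k3 * F a + c4 / k2 * b + c6"
    then obtain c1 c2 c3 c4 c5 c6 where H: "\<forall>a b c.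
        V (pt a b c) $ 1 = c1 * b + c2 * c + c3
      \<and> V (pt a b c) $ 2 = - c1 * k2 * F a - c4 / k3 * c + c5
      \<and> V (pt a b c) $ 3 = - c2 * k3 * F a + c4 / k2 * b + c6" by blast
    show "\<forall>a b c.
       deriv (\<lambda>t. V (pt t b c) $ 1) a = 0
     \<and> deriv (\<lambda>t. V (pt a t c) $ 2) b = 0
     \<and> deriv (\<lambda>t. V (pt a b t) $ 3) c = 0
     \<and> deriv (\<lambda>t. V (pt a t c) $ 1) b / f1 a + deriv (\<lambda>t. V (pt t b c) $ 2) a / k2 = 0
     \<and> deriv (\<lambda>t. V (pt a b t) $ 1) c / f1 a + deriv (\<lambda>t. V (pt t b c) $ 3) a / k3 = 0
     \<and> deriv (\<lambda>t. V (pt a b t) $ 2) c / k2 + deriv (\<lambda>t. V (pt a t c) $ 3) b / k3 = 0"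
      using solve_bwd[where A="\<lambda>a b c. V (pt a b c) $ 1" and B="\<lambda>a b c. V (pt a b c) $ 2"
            and C="\<lambda>a b c. V (pt a b c) $ 3", OF f1nz assms(3,4) Fd H] by blast
  qed
qed

end
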